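(* Let $T$ be a (not necessarily binary) planted tree over $L$, let $T'$ and $T''$ be binary trees that both resolve $T$, and let $\sigma$ be a fixed leaf ordering. Let $v$ be a vertex of $T$ with children $u_1,\dots,u_p$ ($p\ge2$), and for each $t$ let $s_t=\min\{\sigma(l): l\in L(T_{u_t})\}$. For a binary resolution $\tilde T\in\{T',T''\}$ let $V_I(B_{\tilde T})$ be the set of internal vertices $w$ of $\tilde T$ whose cluster $cl_{\tilde T}(w)$ is the union of the clusters $L(T_{u_t})$ over at least two children $u_t$ of $v$. Then $$\sigma(V_I(B_{T'}))=\sigma(V_I(B_{T''}))=\{-s_t : 1\le t\le p,\ s_t\ne\min\{s_1,\dots,s_p\}\},$$ where $\sigma(\cdot)$ denotes the OLA index of a vertex computed in $T'$, respectively $T''$.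
   Context: Trees. Fix a finite label set $L$ containing a distinguished label $\rho$, and let $n=|L\setminus\{\rho\}|$. A planted tree $T$ over $L$ is a rooted tree whose top vertex is labeled $\rho$ and has exactly one child $r(T)$ (the root), in which every other non-leaf vertex has at least two children, and whose leaves are bijectively labeled by $L\setminus\{\rho\}$; it is binary if every non-leaf vertex other than $\rho$ has exactly two children. For a vertex $v$, $T_v$ is the subtree rooted at $v$ and $cl(v)=L(T_v)$ is its cluster. A binary tree $T'$ resolves $T$ if $L(T')=L(T)$ and there is a set of edges of $T'$ whose contraction yields $T$. OLA indexing. A leaf ordering is a bijection $\sigma:L\setminus\{\rho\}\to\{0,\dots,n-1\}$. For a binary tree $T'$ over $L$ and a vertex $v\ne\rho$, let $\mu(v)=\min\{\sigma(l): l\in L(T'_v)\setminus\{\rho\}\}$; each leaf $l$ gets index $\sigma(l)$, and each internal vertex $v$ (not a leaf, not $\rho$) with children $v_1,v_2$ gets index $\sigma(v):=-\max\{\mu(v_1),\mu(v_2)\}$. *)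

theory Defs
  imports Main "HOL-Library.Multiset"
begin

text \<open>The planting vertex labelled rho is left
implicit: a planted tree is represented by its root r(T) (the unique child of rho).
Vertices of a tree are represented by the subtrees rooted at them.\<close>

datatype 'a tree = Leaf 'a | Node "'a tree list"

fun children :: "'a tree \<Rightarrow> 'a tree list" where
  "children (Leaf a) = []"
| "children (Node ts) = ts"

fun leaves_list :: "'a tree \<Rightarrow> 'a list" where
  "leaves_list (Leaf a) = [a]"
| "leaves_list (Node ts) = concat (map leaves_list ts)"

definition cl :: "'a tree \<Rightarrow> 'a set" where
  "cl t = set (leaves_list t)"

fun vertices :: "'a tree \<Rightarrow> 'a tree set" where
  "vertices (Leaf a) = {Leaf a}"
| "vertices (Node ts) = insert (Node ts) (\<Union>t\<in>set ts. vertices t)"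

fun is_internal :: "'a tree \<Rightarrow> bool" where
  "is_internal (Leaf a) = False"
| "is_internal (Node ts) = True"

definition planted_tree :: "'a set \<Rightarrow> 'a \<Rightarrow> 'a tree \<Rightarrow> bool" where
  "planted_tree L \<rho> T \<longleftrightarrow> finite L \<and> \<rho> \<in> L \<and>
     distinct (leaves_list T) \<and> set (leaves_list T) = L - {\<rho>} \<and>
     (\<forall>v\<in>vertices T. is_internal v \<longrightarrow> length (children v) \<ge> 2)"

definition binary_tree :: "'a set \<Rightarrow> 'a \<Rightarrow> 'a tree \<Rightarrow> bool" where
  "binary_tree L \<rho> T \<longleftrightarrow> planted_tree L \<rho> T \<and>
     (\<forall>v\<in>vertices T. is_internal v \<longrightarrow> length (children v) = 2)"

text \<open>Contraction of a single edge between two non-leaf vertices (the edge from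
rho to the root is not contracted, as the result must again be planted).\<close>
inductive contract1 :: "'a tree \<Rightarrow> 'a tree \<Rightarrow> bool" where
  here: "contract1 (Node (xs @ [Node ys] @ zs)) (Node (xs @ ys @ zs))"
| deeper: "contract1 t t' \<Longrightarrow> contract1 (Node (xs @ [t] @ zs)) (Node (xs @ [t'] @ zs))"

inductive tree_iso :: "'a tree \<Rightarrow> 'a tree \<Rightarrow> bool" where
  iso_leaf: "tree_iso (Leaf (a::'a)) (Leaf a)"
| iso_node: "list_all2 tree_iso xs (ys' :: 'a tree list) \<Longrightarrow> mset ys' = mset ys \<Longrightarrow> tree_iso (Node xs) (Node ys)"

definition resolves :: "'a set \<Rightarrow> 'a \<Rightarrow> 'a tree \<Rightarrow> 'a tree \<Rightarrow> bool" where
  "resolves L \<rho> T' T \<longleftrightarrow> binary_tree L \<rho> T' \<and> cl T' = cl T \<and>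
     (\<exists>T0. contract1\<^sup>*\<^sup>* T' T0 \<and> tree_iso T0 T)"

definition leaf_ordering :: "'a set \<Rightarrow> 'a \<Rightarrow> ('a \<Rightarrow> nat) \<Rightarrow> bool" where
  "leaf_ordering L \<rho> \<sigma> \<longleftrightarrow> bij_betw \<sigma> (L - {\<rho>}) {0..<card (L - {\<rho>})}"

definition mu :: "('a \<Rightarrow> nat) \<Rightarrow> 'a tree \<Rightarrow> nat" where
  "mu \<sigma> v = Min (\<sigma> ` cl v)"

fun ola_index :: "('a \<Rightarrow> nat) \<Rightarrow> 'a tree \<Rightarrow> int" where
  "ola_index \<sigma> (Leaf l) = int (\<sigma> l)"
| "ola_index \<sigma> (Node ts) = - int (Max (mu \<sigma> ` set ts))"

definition VI :: "'a tree \<Rightarrow> 'a tree \<Rightarrow> 'a tree set" where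
  "VI v Tt = {w \<in> vertices Tt. is_internal w \<and>
      (\<exists>S \<subseteq> set (children v). card S \<ge> 2 \<and> cl w = \<Union> (cl ` S))}"

end

theory Submission
  imports Defs
begin

lemma cl_Node: "cl (Node ts) = (\<Union>t\<in>set ts. cl t)"
  by (simp add: cl_def)
lemma cl_Leaf: "cl (Leaf a) = {a}"
  by (simp add: cl_def)
lemma vertices_self: "t \<in> vertices t"
  by (cases t) auto
lemma vertices_trans: "x \<in> vertices t \<Longrightarrow> vertices x \<subseteq> vertices t"
  by (induction t) auto
lemma cl_sub: "x \<in> vertices t \<Longrightarrow> cl x \<subseteq> cl t"
  by (induction t) (auto simp: cl_Node)
lemma finite_cl: "finite (cl t)"
  by (simp add: cl_def)
lemma dist_sub: "x \<in> vertices t \<Longrightarrow> distinct (leaves_list t) \<Longrightarrow> distinct (leaves_list x)"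
proof (induction t)
  case (Leaf a) then show ?case by simp
next
  case (Node ts)
  then show ?case by (auto simp: distinct_concat_iff)
qed
lemma cl_nonempty: "\<forall>w\<in>vertices t. is_internal w \<longrightarrow> children w \<noteq> [] \<Longrightarrow> cl t \<noteq> {}"
proof (induction t)
  case (Leaf a) then show ?case by (simp add: cl_Leaf)
next
  case (Node ts)
  then obtain s where s: "s \<in> set ts" by (cases ts) auto
  with Node have "cl s \<noteq> {}" by auto
  with s show ?case by (auto simp: cl_Node)
qed

lemma contract1_props: "contract1 t t' \<Longrightarrow> leaves_list t' = leaves_list t \<and> (\<forall>y\<in>vertices t'. \<exists>x\<in>vertices t. cl x = cl y)"
proof (induction rule: contract1.induct)
  case (here xs ys zs)
  show ?case
  proof
    show "leaves_list (Node (xs @ ys @ zs)) = leaves_list (Node (xs @ [Node ys] @ zs))" by simp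
    show "\<forall>y\<in>vertices (Node (xs @ ys @ zs)). \<exists>x\<in>vertices (Node (xs @ [Node ys] @ zs)). cl x = cl y"
    proof
      fix y assume y: "y \<in> vertices (Node (xs @ ys @ zs))"
      show "\<exists>x\<in>vertices (Node (xs @ [Node ys] @ zs)). cl x = cl y"
      proof (cases "y = Node (xs @ ys @ zs)")
        case True then show ?thesis by (auto simp: cl_def)
      next
        case False
        then obtain s where s: "s \<in> set xs \<union> set ys \<union> set zs" "y \<in> vertices s" using y by auto
        then have "y \<in> vertices (Node (xs @ [Node ys] @ zs))" by auto
        then show ?thesis by blast
      qed
    qed
  qed
next
  case (deeper t t' xs zs)
  then show ?case by (auto simp: cl_def)
qed

lemma contract_star: "contract1\<^sup>*\<^sup>* t t' \<Longrightarrow> (\<forall>y\<in>vertices t'. \<exists>x\<in>vertices t. cl x = cl y)"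
proof (induction rule: rtranclp_induct)
  case base then show ?case by blast
next
  case (step y z) then show ?case using contract1_props by metis
qed

lemma iso_props: "tree_iso a b \<Longrightarrow> cl a = cl b \<and> (\<forall>y\<in>vertices b. \<exists>x\<in>vertices a. cl x = cl y)"
proof (induction rule: tree_iso.induct)
  case (iso_leaf a) then show ?case by auto
next
  case (iso_node xs ys' ys)
  have se: "set ys' = set ys" using iso_node(2) by (metis set_mset_mset)
  have len: "length xs = length ys'" using iso_node(1) by (rule list_all2_lengthD)
  have nth: "\<And>i. i < length xs \<Longrightarrow> cl (xs!i) = cl (ys'!i) \<and> (\<forall>y\<in>vertices (ys'!i). \<exists>x\<in>vertices (xs!i). cl x = cl y)"
    using iso_node(1) by (simp add: list_all2_conv_all_nth)
  have c: "cl (Node xs) = cl (Node ys)"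
  proof -
    have "(\<Union>t\<in>set xs. cl t) = (\<Union>t\<in>set ys'. cl t)"
    proof (rule antisym; rule UN_least)
      fix x assume "x \<in> set xs"
      then obtain i where "i < length xs" "x = xs!i" by (auto simp: in_set_conv_nth)
      then show "cl x \<subseteq> (\<Union>t\<in>set ys'. cl t)" using nth len by (metis UN_upper nth_mem)
    next
      fix x assume "x \<in> set ys'"
      then obtain i where "i < length xs" "x = ys'!i" using len by (auto simp: in_set_conv_nth)
      then show "cl x \<subseteq> (\<Union>t\<in>set xs. cl t)" using nth len by (metis UN_upper nth_mem)
    qed
    then show ?thesis by (simp add: cl_Node se)
  qed
  have "\<forall>y\<in>vertices (Node ys). \<exists>x\<in>vertices (Node xs). cl x = cl y"
  proof
    fix y assume "y \<in> vertices (Node ys)"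
    then consider "y = Node ys" | c where "c \<in> set ys'" "y \<in> vertices c" using se by auto
    then show "\<exists>x\<in>vertices (Node xs). cl x = cl y"
    proof cases
      case 1 then show ?thesis using c by auto
    next
      case 2
      then obtain i where i: "i < length xs" "c = ys'!i" using len by (auto simp: in_set_conv_nth)
      with nth 2 obtain x where "x \<in> vertices (xs!i)" "cl x = cl y" by blast
      moreover have "xs!i \<in> set xs" using i by simp
      ultimately show ?thesis by auto
    qed
  qed
  with c show ?case by blast
qed


definition Wset :: "'a tree \<Rightarrow> 'a set set \<Rightarrow> 'a tree set" where
  "Wset t P = {w \<in> vertices t. is_internal w \<and> (\<exists>S\<subseteq>P. 2 \<le> card S \<and> cl w = \<Union>S)}"
definition mm :: "('a \<Rightarrow> nat) \<Rightarrow> 'a set \<Rightarrow> nat" where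
  "mm \<sigma> B = Min (\<sigma> ` B)"
definition Rset :: "('b \<Rightarrow> nat) \<Rightarrow> 'b set \<Rightarrow> int set" where
  "Rset f P = {- int (f B) | B. B \<in> P \<and> f B \<noteq> Min (f ` P)}"

lemma small_W: "finite P \<Longrightarrow> card P < 2 \<Longrightarrow> Wset t P = {}"
proof -
  assume a: "finite P" "card P < 2"
  have c: "\<And>S. S \<subseteq> P \<Longrightarrow> card S < 2" using a by (meson card_mono le_less_trans)
  show ?thesis
  proof (rule equals0I)
    fix w assume "w \<in> Wset t P"
    then obtain S where S: "S \<subseteq> P" "2 \<le> card S" unfolding Wset_def by blast
    from c[OF S(1)] S(2) show False by linarith
  qed
qed

lemma small_R: "finite P \<Longrightarrow> card P < 2 \<Longrightarrow> Rset f P = {}"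
proof -
  assume "finite P" "card P < 2"
  then have "P = {} \<or> (\<exists>B. P = {B})"
    by (metis One_nat_def card_1_singletonE card_0_eq less_2_cases)
  then show ?thesis
  proof
    assume "P = {}" then show ?thesis unfolding Rset_def by simp
  next
    assume "\<exists>B. P = {B}"
    then obtain B where "P = {B}" by blast
    then show ?thesis unfolding Rset_def by simp
  qed
qed

lemma mm_Union:
  assumes "finite P" "P \<noteq> {}" "\<forall>B\<in>P. finite B \<and> B \<noteq> {}"
  shows "mm \<sigma> (\<Union>P) = Min (mm \<sigma> ` P)"
proof -
  have f: "finite (\<sigma> ` \<Union>P)" using assms by auto
  have ne: "\<sigma> ` \<Union>P \<noteq> {}" using assms by auto
  have f2: "finite (mm \<sigma> ` P)" "mm \<sigma> ` P \<noteq> {}" using assms by auto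
  show ?thesis unfolding mm_def
  proof (rule antisym)
    obtain B where B: "B \<in> P" "Min ((\<lambda>B. Min (\<sigma> ` B)) ` P) = Min (\<sigma> ` B)"
      using Min_in[OF f2] unfolding mm_def by auto
    have "Min (\<sigma> ` B) \<in> \<sigma> ` B" using B assms by (intro Min_in) auto
    then have "Min (\<sigma> ` B) \<in> \<sigma> ` \<Union>P" using B by auto
    then show "Min (\<sigma> ` \<Union>P) \<le> Min ((\<lambda>B. Min (\<sigma> ` B)) ` P)"
      using B f by simp
  next
    obtain x where x: "x \<in> \<Union>P" "Min (\<sigma> ` \<Union>P) = \<sigma> x" using Min_in[OF f ne] by auto
    then obtain B where B: "B \<in> P" "x \<in> B" by auto
    have "Min ((\<lambda>B. Min (\<sigma> ` B)) ` P) \<le> Min (\<sigma> ` B)"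
      using B f2 unfolding mm_def by auto
    also have "\<dots> \<le> \<sigma> x" using B assms by auto
    finally show "Min ((\<lambda>B. Min (\<sigma> ` B)) ` P) \<le> Min (\<sigma> ` \<Union>P)" using x by simp
  qed
qed

lemma R_split:
  assumes fin: "finite P" and un: "P = Pa \<union> Pb" and dj: "Pa \<inter> Pb = {}"
    and nea: "Pa \<noteq> {}" and neb: "Pb \<noteq> {}" and inj: "inj_on f P"
  shows "Rset f P = insert (- int (max (Min (f ` Pa)) (Min (f ` Pb)))) (Rset f Pa \<union> Rset f Pb)"
proof -
  define ma where "ma = Min (f ` Pa)"
  define mb where "mb = Min (f ` Pb)"
  have fa: "finite Pa" "finite Pb" using fin un by auto
  obtain Ba where Ba: "Ba \<in> Pa" "f Ba = ma" proof -
    have "Min (f ` Pa) \<in> f ` Pa" using fa nea by (intro Min_in) auto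
    then obtain B where "B \<in> Pa" "Min (f ` Pa) = f B" by blast
    then show ?thesis by (intro that[of B]) (simp_all add: ma_def)
  qed
  obtain Bb where Bb: "Bb \<in> Pb" "f Bb = mb" proof -
    have "Min (f ` Pb) \<in> f ` Pb" using fa neb by (intro Min_in) auto
    then obtain B where "B \<in> Pb" "Min (f ` Pb) = f B" by blast
    then show ?thesis by (intro that[of B]) (simp_all add: mb_def)
  qed
  have mP: "Min (f ` P) = min ma mb" unfolding ma_def mb_def un image_Un
    using fa nea neb by (simp add: Min.union)
  have neq: "ma \<noteq> mb"
  proof
    assume "ma = mb"
    then have "Ba = Bb" using inj Ba Bb un by (metis UnCI inj_on_def)
    then show False using Ba Bb dj by auto
  qed
  have lea: "\<And>B. B \<in> Pa \<Longrightarrow> ma \<le> f B" unfolding ma_def using fa by auto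
  have leb: "\<And>B. B \<in> Pb \<Longrightarrow> mb \<le> f B" unfolding mb_def using fa by auto
  have notb: "\<And>B. B \<in> Pa \<Longrightarrow> f B \<noteq> mb"
    using inj Bb dj un by (metis UnCI disjoint_iff inj_on_def)
  have nota: "\<And>B. B \<in> Pb \<Longrightarrow> f B \<noteq> ma"
    using inj Ba dj un by (metis UnCI disjoint_iff inj_on_def)
  show ?thesis
    unfolding ma_def[symmetric] mb_def[symmetric]
  proof (rule antisym)
    show "Rset f P \<subseteq> insert (- int (max ma mb)) (Rset f Pa \<union> Rset f Pb)"
    proof
      fix x assume "x \<in> Rset f P"
      then obtain B where B: "x = - int (f B)" "B \<in> P" "f B \<noteq> min ma mb"
        unfolding Rset_def mP by blast
      show "x \<in> insert (- int (max ma mb)) (Rset f Pa \<union> Rset f Pb)"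
      proof (cases "B \<in> Pa")
        case True
        show ?thesis
        proof (cases "f B = ma")
          case True
          then have "max ma mb = f B" using B(3) by linarith
          then show ?thesis using B by simp
        next
          case False
          then have "x \<in> Rset f Pa" unfolding Rset_def ma_def[symmetric] using B \<open>B \<in> Pa\<close> by blast
          then show ?thesis by simp
        qed
      next
        case False
        then have Bp: "B \<in> Pb" using B un by auto
        show ?thesis
        proof (cases "f B = mb")
          case True
          then have "max ma mb = f B" using B(3) by linarith
          then show ?thesis using B by simp
        next
          case False
          then have "x \<in> Rset f Pb" unfolding Rset_def mb_def[symmetric] using B Bp by blast
          then show ?thesis by simp
        qed
      qed
    qed
  next
    show "insert (- int (max ma mb)) (Rset f Pa \<union> Rset f Pb) \<subseteq> Rset f P"
    proof (rule insert_subsetI)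
      show "- int (max ma mb) \<in> Rset f P"
      proof (cases "ma < mb")
        case True
        then have "max ma mb = f Bb" "f Bb \<noteq> min ma mb" using Bb by auto
        moreover have "Bb \<in> P" using Bb un by auto
        ultimately show ?thesis unfolding Rset_def mP by auto
      next
        case False
        then have "max ma mb = f Ba" "f Ba \<noteq> min ma mb" using Ba neq by auto
        moreover have "Ba \<in> P" using Ba un by auto
        ultimately show ?thesis unfolding Rset_def mP by auto
      qed
    next
      show "Rset f Pa \<union> Rset f Pb \<subseteq> Rset f P"
      proof
        fix x assume "x \<in> Rset f Pa \<union> Rset f Pb"
        then obtain B where B: "x = - int (f B)" "B \<in> Pa \<and> f B \<noteq> ma \<or> B \<in> Pb \<and> f B \<noteq> mb"
          unfolding Rset_def ma_def mb_def by blast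
        then have "B \<in> P" "f B \<noteq> min ma mb" using un notb nota by (auto simp: min_def)
        then show "x \<in> Rset f P" unfolding Rset_def mP using B(1) by blast
      qed
    qed
  qed
qed

lemma ne_bin: "\<forall>w\<in>vertices t. is_internal w \<longrightarrow> length (children w) = 2 \<Longrightarrow> y \<in> vertices t \<Longrightarrow> cl y \<noteq> {}"
proof -
  assume a: "\<forall>w\<in>vertices t. is_internal w \<longrightarrow> length (children w) = 2" "y \<in> vertices t"
  then have "\<forall>w\<in>vertices y. is_internal w \<longrightarrow> children w \<noteq> []"
    using vertices_trans[OF a(2)] by fastforce
  then show ?thesis by (rule cl_nonempty)
qed

lemma G:
  fixes t :: "'a tree" and \<sigma> :: "'a \<Rightarrow> nat"
  assumes "\<forall>w\<in>vertices t. is_internal w \<longrightarrow> length (children w) = 2"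
    and "distinct (leaves_list t)" and "inj_on \<sigma> (cl t)"
    and "finite P" and "P \<subseteq> cl ` vertices t"
    and "\<forall>B\<in>P. \<forall>C\<in>P. B \<noteq> C \<longrightarrow> B \<inter> C = {}"
    and "\<Union>P \<in> cl ` vertices t"
  shows "ola_index \<sigma> ` Wset t P = Rset (mm \<sigma>) P"
  using assms
proof (induction t arbitrary: P)
  case (Leaf x)
  have "P \<subseteq> {{x}}" using Leaf(5) by (simp add: cl_Leaf)
  then have "card P \<le> 1" using card_mono[of "{{x}}" P] by simp
  then have c: "card P < 2" by simp
  show ?case by (simp add: small_W[OF Leaf(4) c] small_R[OF Leaf(4) c])
next
  case (Node ts)
  define t where "t = Node ts"
  have bin: "\<forall>w\<in>vertices t. is_internal w \<longrightarrow> length (children w) = 2" using Node.prems(1) t_def by simp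
  have distt: "distinct (leaves_list t)" using Node.prems(2) t_def by simp
  have injt: "inj_on \<sigma> (cl t)" using Node.prems(3) t_def by simp
  have finP: "finite P" by fact
  have Psub: "P \<subseteq> cl ` vertices t" using Node.prems(5) t_def by simp
  have disj: "\<forall>B\<in>P. \<forall>C\<in>P. B \<noteq> C \<longrightarrow> B \<inter> C = {}" by fact
  have UP: "\<Union>P \<in> cl ` vertices t" using Node.prems(7) t_def by simp
  have "ola_index \<sigma> ` Wset t P = Rset (mm \<sigma>) P"
  proof (cases "card P < 2")
    case True then show ?thesis by (simp add: small_W[OF finP True] small_R[OF finP True])
  next
    case False
    have "length ts = 2" using bin t_def by (simp add: vertices_self)
    then obtain a b where ts: "ts = [a, b]"
      by (auto simp: numeral_2_eq_2 length_Suc_conv)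
    have vt: "vertices t = insert t (vertices a \<union> vertices b)" by (simp add: t_def ts)
    have clt: "cl t = cl a \<union> cl b" by (simp add: t_def ts cl_Node)
    have disjab: "cl a \<inter> cl b = {}" using distt by (simp add: t_def ts cl_def)
    have ne: "\<And>y. y \<in> vertices t \<Longrightarrow> cl y \<noteq> {}" using bin ne_bin by blast
    have va: "vertices a \<subseteq> vertices t" and vb: "vertices b \<subseteq> vertices t" using vt by auto
    have nea: "cl a \<noteq> {}" and neb: "cl b \<noteq> {}" using ne va vb vertices_self by blast+
    have IHgen: "\<And>c Q. c \<in> {a, b} \<Longrightarrow> finite Q \<Longrightarrow> Q \<subseteq> cl ` vertices c \<Longrightarrow>
        \<forall>B\<in>Q. \<forall>C\<in>Q. B \<noteq> C \<longrightarrow> B \<inter> C = {} \<Longrightarrow> \<Union>Q \<in> cl ` vertices c \<Longrightarrow>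
        ola_index \<sigma> ` Wset c Q = Rset (mm \<sigma>) Q"
    proof -
      fix c Q assume c: "c \<in> {a, b}" and Q: "finite Q" "Q \<subseteq> cl ` vertices c"
        "\<forall>B\<in>Q. \<forall>C\<in>Q. B \<noteq> C \<longrightarrow> B \<inter> C = {}" "\<Union>Q \<in> cl ` vertices c"
      have cv: "c \<in> vertices t" using c vt vertices_self by auto
      have vc: "vertices c \<subseteq> vertices t" using vertices_trans[OF cv] .
      show "ola_index \<sigma> ` Wset c Q = Rset (mm \<sigma>) Q"
      proof (rule Node.IH)
        show "c \<in> set ts" using c ts by simp
        show "\<forall>w\<in>vertices c. is_internal w \<longrightarrow> length (children w) = 2" using bin vc by blast
        show "distinct (leaves_list c)" using dist_sub[OF cv distt] .
        show "inj_on \<sigma> (cl c)" using injt cl_sub[OF cv] by (rule inj_on_subset)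
      qed (use Q in auto)
    qed
    have child: "\<And>c d. (c = a \<and> d = b) \<or> (c = b \<and> d = a) \<Longrightarrow> \<Union>P \<in> cl ` vertices c \<Longrightarrow>
        ola_index \<sigma> ` Wset t P = Rset (mm \<sigma>) P"
    proof -
      fix c d assume cd: "(c = a \<and> d = b) \<or> (c = b \<and> d = a)" and Uc: "\<Union>P \<in> cl ` vertices c"
      have cdj: "cl c \<inter> cl d = {}" using cd disjab by auto
      have ned: "cl d \<noteq> {}" using cd nea neb by auto
      have vt': "vertices t = insert t (vertices c \<union> vertices d)" using cd vt by auto
      have clt': "cl t = cl c \<union> cl d" using cd clt by auto
      have UPc: "\<Union>P \<subseteq> cl c" using Uc cl_sub by blast
      have tnot: "\<not> cl t \<subseteq> cl c" using clt' cdj ned by blast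
      have Pc: "P \<subseteq> cl ` vertices c"
      proof
        fix B assume B: "B \<in> P"
        then obtain y where y: "y \<in> vertices t" "B = cl y" using Psub by blast
        have Bs: "B \<subseteq> cl c" using B UPc by blast
        have "B \<noteq> {}" using y ne by blast
        show "B \<in> cl ` vertices c"
        proof -
          have "y \<noteq> t" using Bs y tnot by blast
          moreover have "y \<notin> vertices d" using cl_sub[of y d] Bs y cdj \<open>B \<noteq> {}\<close> by blast
          ultimately have "y \<in> vertices c" using y vt' by blast
          then show ?thesis using y by blast
        qed
      qed
      have W: "Wset t P = Wset c P"
      proof -
        have "\<And>w. w \<in> vertices t \<Longrightarrow> (\<exists>S\<subseteq>P. 2 \<le> card S \<and> cl w = \<Union>S) \<Longrightarrow> w \<in> vertices c"
        proof -
          fix w assume w: "w \<in> vertices t" and "\<exists>S\<subseteq>P. 2 \<le> card S \<and> cl w = \<Union>S"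
          then obtain S where S: "S \<subseteq> P" "2 \<le> card S" "cl w = \<Union>S" by blast
          then have "S \<noteq> {}" by auto
          then obtain B where B: "B \<in> S" by blast
          have "B \<noteq> {}" using B S(1) Psub ne by blast
          have "B \<subseteq> cl c" using B S(1) UPc by blast
          have "B \<subseteq> cl w" using B S(3) by blast
          have "w \<noteq> t"
          proof
            assume "w = t"
            then have "cl t \<subseteq> \<Union>P" using S(1) S(3) by auto
            then show False using UPc tnot by blast
          qed
          moreover have "w \<notin> vertices d"
            using cl_sub[of w d] \<open>B \<subseteq> cl c\<close> \<open>B \<subseteq> cl w\<close> \<open>B \<noteq> {}\<close> cdj by blast
          ultimately show "w \<in> vertices c" using w vt' by blast
        qed
        moreover have "vertices c \<subseteq> vertices t" using vt' by blast
        ultimately show ?thesis unfolding Wset_def by blast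
      qed
      have cab: "c \<in> {a, b}" using cd by auto
      show "ola_index \<sigma> ` Wset t P = Rset (mm \<sigma>) P"
        unfolding W by (rule IHgen[OF cab finP Pc disj Uc])
    qed
    obtain x where x: "x \<in> vertices t" "cl x = \<Union>P" using UP by blast
    consider "x \<in> vertices a" | "x \<in> vertices b" | "x = t" using x vt by blast
    then show ?thesis
    proof cases
      case 1 then show ?thesis using child x by blast
    next
      case 2 then show ?thesis using child x by blast
    next
      case 3
      have UPt: "\<Union>P = cl t" using x 3 by simp
      have Bne: "\<And>B. B \<in> P \<Longrightarrow> B \<noteq> {} \<and> finite B" using Psub ne finite_cl by blast
      have side: "\<And>B. B \<in> P \<Longrightarrow> B \<subseteq> cl a \<or> B \<subseteq> cl b"
      proof -
        fix B assume B: "B \<in> P"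
        then obtain y where y: "y \<in> vertices t" "B = cl y" using Psub by blast
        have "y \<noteq> t"
        proof
          assume "y = t"
          then have BU: "B = \<Union>P" using y UPt by simp
          have "P \<noteq> {B}" using False by auto
          then obtain C where C: "C \<in> P" "C \<noteq> B" using B by blast
          then have "C \<subseteq> B" using BU by blast
          moreover have "C \<inter> B = {}" using disj C B by blast
          ultimately show False using Bne[OF C(1)] by blast
        qed
        then have "y \<in> vertices a \<or> y \<in> vertices b" using y vt by blast
        then show "B \<subseteq> cl a \<or> B \<subseteq> cl b" using y cl_sub by blast
      qed
      have sidegen: "\<And>c d. (c = a \<and> d = b) \<or> (c = b \<and> d = a) \<Longrightarrow>
         {B \<in> P. B \<subseteq> cl c} \<subseteq> cl ` vertices c \<and> \<Union>{B \<in> P. B \<subseteq> cl c} = cl c \<and>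
         (\<forall>w\<in>vertices c. (\<exists>S\<subseteq>P. 2 \<le> card S \<and> cl w = \<Union>S) \<longleftrightarrow>
              (\<exists>S\<subseteq>{B \<in> P. B \<subseteq> cl c}. 2 \<le> card S \<and> cl w = \<Union>S))"
      proof -
        fix c d assume cd: "(c = a \<and> d = b) \<or> (c = b \<and> d = a)"
        have cdj: "cl c \<inter> cl d = {}" using cd disjab by auto
        have ned: "cl d \<noteq> {}" using cd nea neb by auto
        have vt': "vertices t = insert t (vertices c \<union> vertices d)" using cd vt by auto
        have clt': "cl t = cl c \<union> cl d" using cd clt by auto
        have side': "\<And>B. B \<in> P \<Longrightarrow> B \<subseteq> cl c \<or> B \<subseteq> cl d" using side cd by blast
        have tnot: "\<not> cl t \<subseteq> cl c" using clt' cdj ned by blast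
        have A1: "{B \<in> P. B \<subseteq> cl c} \<subseteq> cl ` vertices c"
        proof
          fix B assume B: "B \<in> {B \<in> P. B \<subseteq> cl c}"
          then obtain y where y: "y \<in> vertices t" "B = cl y" using Psub by blast
          have "B \<noteq> {}" using B Bne by blast
          have "y \<noteq> t" using B y tnot by blast
          moreover have "y \<notin> vertices d" using cl_sub[of y d] B y cdj \<open>B \<noteq> {}\<close> by blast
          ultimately have "y \<in> vertices c" using y vt' by blast
          then show "B \<in> cl ` vertices c" using y by blast
        qed
        have A2: "\<Union>{B \<in> P. B \<subseteq> cl c} = cl c"
        proof
          show "\<Union>{B \<in> P. B \<subseteq> cl c} \<subseteq> cl c" by blast
          show "cl c \<subseteq> \<Union>{B \<in> P. B \<subseteq> cl c}"
          proof
            fix l assume l: "l \<in> cl c"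
            then have "l \<in> \<Union>P" using UPt clt' by blast
            then obtain B where B: "B \<in> P" "l \<in> B" by blast
            have "\<not> B \<subseteq> cl d" using B(2) l cdj by blast
            then have "B \<subseteq> cl c" using side'[OF B(1)] by blast
            then show "l \<in> \<Union>{B \<in> P. B \<subseteq> cl c}" using B by blast
          qed
        qed
        have A3: "\<forall>w\<in>vertices c. (\<exists>S\<subseteq>P. 2 \<le> card S \<and> cl w = \<Union>S) \<longleftrightarrow>
              (\<exists>S\<subseteq>{B \<in> P. B \<subseteq> cl c}. 2 \<le> card S \<and> cl w = \<Union>S)"
        proof (intro ballI iffI)
          fix w assume w: "w \<in> vertices c" and "\<exists>S\<subseteq>P. 2 \<le> card S \<and> cl w = \<Union>S"
          then obtain S where S: "S \<subseteq> P" "2 \<le> card S" "cl w = \<Union>S" by blast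
          have "\<And>B. B \<in> S \<Longrightarrow> B \<subseteq> cl c" using S(3) cl_sub[OF w] by blast
          then have "S \<subseteq> {B \<in> P. B \<subseteq> cl c}" using S(1) by blast
          then show "\<exists>S\<subseteq>{B \<in> P. B \<subseteq> cl c}. 2 \<le> card S \<and> cl w = \<Union>S" using S(2,3) by blast
        next
          fix w assume "\<exists>S\<subseteq>{B \<in> P. B \<subseteq> cl c}. 2 \<le> card S \<and> cl w = \<Union>S"
          then obtain S where "S \<subseteq> {B \<in> P. B \<subseteq> cl c}" "2 \<le> card S" "cl w = \<Union>S" by blast
          then show "\<exists>S\<subseteq>P. 2 \<le> card S \<and> cl w = \<Union>S" by blast
        qed
        from A1 A2 A3 show "{B \<in> P. B \<subseteq> cl c} \<subseteq> cl ` vertices c \<and> \<Union>{B \<in> P. B \<subseteq> cl c} = cl c \<and>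
         (\<forall>w\<in>vertices c. (\<exists>S\<subseteq>P. 2 \<le> card S \<and> cl w = \<Union>S) \<longleftrightarrow>
              (\<exists>S\<subseteq>{B \<in> P. B \<subseteq> cl c}. 2 \<le> card S \<and> cl w = \<Union>S))" by (intro conjI)
      qed
      define Pa where "Pa = {B \<in> P. B \<subseteq> cl a}"
      define Pb where "Pb = {B \<in> P. B \<subseteq> cl b}"
      have SA: "Pa \<subseteq> cl ` vertices a" "\<Union>Pa = cl a"
         "\<forall>w\<in>vertices a. (\<exists>S\<subseteq>P. 2 \<le> card S \<and> cl w = \<Union>S) \<longleftrightarrow> (\<exists>S\<subseteq>Pa. 2 \<le> card S \<and> cl w = \<Union>S)"
        using sidegen[of a b] unfolding Pa_def[symmetric] by simp_all
      have SB: "Pb \<subseteq> cl ` vertices b" "\<Union>Pb = cl b"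
         "\<forall>w\<in>vertices b. (\<exists>S\<subseteq>P. 2 \<le> card S \<and> cl w = \<Union>S) \<longleftrightarrow> (\<exists>S\<subseteq>Pb. 2 \<le> card S \<and> cl w = \<Union>S)"
        using sidegen[of b a] unfolding Pb_def[symmetric] by simp_all
      have finPa: "finite Pa" "finite Pb" using finP unfolding Pa_def Pb_def by auto
      have un: "P = Pa \<union> Pb" using side unfolding Pa_def Pb_def by blast
      have dj: "Pa \<inter> Pb = {}" using Bne disjab unfolding Pa_def Pb_def by blast
      have neP: "Pa \<noteq> {}" "Pb \<noteq> {}" using SA(2) SB(2) nea neb by auto
      have disja: "\<forall>B\<in>Pa. \<forall>C\<in>Pa. B \<noteq> C \<longrightarrow> B \<inter> C = {}" using disj un by blast
      have disjb: "\<forall>B\<in>Pb. \<forall>C\<in>Pb. B \<noteq> C \<longrightarrow> B \<inter> C = {}" using disj un by blast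
      have UPa: "\<Union>Pa \<in> cl ` vertices a" unfolding SA(2) using vertices_self by (rule imageI)
      have UPb: "\<Union>Pb \<in> cl ` vertices b" unfolding SB(2) using vertices_self by (rule imageI)
      have IHa: "ola_index \<sigma> ` Wset a Pa = Rset (mm \<sigma>) Pa"
        by (rule IHgen[OF _ finPa(1) SA(1) disja UPa]) simp
      have IHb: "ola_index \<sigma> ` Wset b Pb = Rset (mm \<sigma>) Pb"
        by (rule IHgen[OF _ finPa(2) SB(1) disjb UPb]) simp
      have tW: "t \<in> Wset t P"
      proof -
        have "is_internal t" by (simp add: t_def)
        moreover have "\<exists>S\<subseteq>P. 2 \<le> card S \<and> cl t = \<Union>S"
          using False UPt by (intro exI[of _ P]) simp
        ultimately show ?thesis unfolding Wset_def using vertices_self by blast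
      qed
      have W: "Wset t P = insert t (Wset a Pa \<union> Wset b Pb)"
      proof (rule antisym)
        show "Wset t P \<subseteq> insert t (Wset a Pa \<union> Wset b Pb)"
        proof
          fix w assume w: "w \<in> Wset t P"
          then have wv: "w \<in> vertices t" and wi: "is_internal w" and wS: "\<exists>S\<subseteq>P. 2 \<le> card S \<and> cl w = \<Union>S"
            unfolding Wset_def by blast+
          from wv vt consider "w = t" | "w \<in> vertices a" | "w \<in> vertices b" by blast
          then show "w \<in> insert t (Wset a Pa \<union> Wset b Pb)"
          proof cases
            case 1 then show ?thesis by simp
          next
            case 2
            then have "\<exists>S\<subseteq>Pa. 2 \<le> card S \<and> cl w = \<Union>S" using SA(3) wS by blast
            then have "w \<in> Wset a Pa" unfolding Wset_def using 2 wi by blast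
            then show ?thesis by simp
          next
            case 3
            then have "\<exists>S\<subseteq>Pb. 2 \<le> card S \<and> cl w = \<Union>S" using SB(3) wS by blast
            then have "w \<in> Wset b Pb" unfolding Wset_def using 3 wi by blast
            then show ?thesis by simp
          qed
        qed
        show "insert t (Wset a Pa \<union> Wset b Pb) \<subseteq> Wset t P"
        proof (intro insert_subsetI Un_least subsetI)
          show "t \<in> Wset t P" by (rule tW)
        next
          fix w assume w: "w \<in> Wset a Pa"
          then have wv: "w \<in> vertices a" and wi: "is_internal w" and wS: "\<exists>S\<subseteq>Pa. 2 \<le> card S \<and> cl w = \<Union>S"
            unfolding Wset_def by blast+
          have "\<exists>S\<subseteq>P. 2 \<le> card S \<and> cl w = \<Union>S" using SA(3) wS wv by blast
          then show "w \<in> Wset t P" unfolding Wset_def using wv va wi by blast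
        next
          fix w assume w: "w \<in> Wset b Pb"
          then have wv: "w \<in> vertices b" and wi: "is_internal w" and wS: "\<exists>S\<subseteq>Pb. 2 \<le> card S \<and> cl w = \<Union>S"
            unfolding Wset_def by blast+
          have "\<exists>S\<subseteq>P. 2 \<le> card S \<and> cl w = \<Union>S" using SB(3) wS wv by blast
          then show "w \<in> Wset t P" unfolding Wset_def using wv vb wi by blast
        qed
      qed
      have injm: "inj_on (mm \<sigma>) P"
      proof (rule inj_onI)
        fix B C assume B: "B \<in> P" and C: "C \<in> P" and eq: "mm \<sigma> B = mm \<sigma> C"
        have "mm \<sigma> B \<in> \<sigma> ` B" unfolding mm_def using Bne[OF B] by (intro Min_in) auto
        then obtain x where xB: "x \<in> B" "mm \<sigma> B = \<sigma> x" by blast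
        have "mm \<sigma> C \<in> \<sigma> ` C" unfolding mm_def using Bne[OF C] by (intro Min_in) auto
        then obtain y where yC: "y \<in> C" "mm \<sigma> C = \<sigma> y" by blast
        have "x \<in> cl t" "y \<in> cl t" using xB yC B C UPt by blast+
        then have "x = y" using injt xB yC eq by (metis inj_onD)
        then show "B = C" using disj B C xB yC by blast
      qed
      have "mm \<sigma> (\<Union>Pa) = Min (mm \<sigma> ` Pa)"
        by (rule mm_Union) (use finPa neP Bne un in auto)
      then have mua: "mu \<sigma> a = Min (mm \<sigma> ` Pa)" using SA(2) by (simp add: mu_def mm_def)
      have "mm \<sigma> (\<Union>Pb) = Min (mm \<sigma> ` Pb)"
        by (rule mm_Union) (use finPa neP Bne un in auto)
      then have mub: "mu \<sigma> b = Min (mm \<sigma> ` Pb)" using SB(2) by (simp add: mu_def mm_def)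
      have ot: "ola_index \<sigma> t = - int (max (Min (mm \<sigma> ` Pa)) (Min (mm \<sigma> ` Pb)))"
        by (simp add: t_def ts mua mub)
      show ?thesis
        unfolding W R_split[OF finP un dj neP injm] image_insert image_Un IHa IHb ot by simp
    qed
  qed
  then show ?case by (simp add: t_def)
qed

lemma dc: "distinct (concat (map f xs)) \<Longrightarrow> i < length xs \<Longrightarrow> j < length xs \<Longrightarrow> i \<noteq> j \<Longrightarrow>
  set (f (xs!i)) \<inter> set (f (xs!j)) = {}"
proof (induction xs arbitrary: i j)
  case Nil then show ?case by simp
next
  case (Cons x xs)
  show ?case
  proof (cases i)
    case 0
    then obtain j' where j': "j = Suc j'" using Cons.prems(4) by (cases j) auto
    then have "xs!j' \<in> set xs" using Cons.prems(3) by simp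
    then show ?thesis using Cons.prems(1) 0 j' by auto
  next
    case (Suc i')
    show ?thesis
    proof (cases j)
      case 0
      have "xs!i' \<in> set xs" using Cons.prems(2) Suc by simp
      then show ?thesis using Cons.prems(1) 0 Suc by auto
    next
      case (Suc j')
      then show ?thesis using Cons.IH[of i' j'] Cons.prems \<open>i = Suc i'\<close> by simp
    qed
  qed
qed

lemma resolves_clusters:
  assumes "resolves L \<rho> T' T" "y \<in> vertices T"
  shows "cl y \<in> cl ` vertices T'"
proof -
  obtain T0 where T0: "contract1\<^sup>*\<^sup>* T' T0" "tree_iso T0 T" using assms(1) unfolding resolves_def by blast
  obtain x0 where x0: "x0 \<in> vertices T0" "cl x0 = cl y" using iso_props[OF T0(2)] assms(2) by blast
  obtain x where x: "x \<in> vertices T'" "cl x = cl x0" using contract_star[OF T0(1)] x0(1) by blast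
  show ?thesis using x x0 by (metis imageI)
qed

lemma main_one:
  fixes L :: "'a set" and \<rho> :: 'a and T T' v :: "'a tree" and \<sigma> :: "'a \<Rightarrow> nat"
    and us :: "'a tree list"
  assumes pl: "planted_tree L \<rho> T"
    and rs: "resolves L \<rho> T' T"
    and lo: "leaf_ordering L \<rho> \<sigma>"
    and vT: "v \<in> vertices T" and vdef: "v = Node us"
  shows "ola_index \<sigma> ` VI v T' = {- int (mu \<sigma> u) | u. u \<in> set us \<and> mu \<sigma> u \<noteq> Min (mu \<sigma> ` set us)}"
proof -
  have bt: "binary_tree L \<rho> T'" using rs unfolding resolves_def by blast
  then have pt': "planted_tree L \<rho> T'" unfolding binary_tree_def by blast
  have bin: "\<forall>w\<in>vertices T'. is_internal w \<longrightarrow> length (children w) = 2"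
    using bt unfolding binary_tree_def by blast
  have dist': "distinct (leaves_list T')" using pt' unfolding planted_tree_def by blast
  have clT': "cl T' = L - {\<rho>}" using pt' unfolding planted_tree_def cl_def by blast
  have inj: "inj_on \<sigma> (cl T')" using lo clT' unfolding leaf_ordering_def bij_betw_def by simp
  define P where "P = cl ` set us"
  have finP: "finite P" unfolding P_def by simp
  have usv: "set us \<subseteq> vertices T"
  proof
    fix u assume "u \<in> set us"
    then have "u \<in> vertices v" using vdef vertices_self by auto
    then show "u \<in> vertices T" using vertices_trans[OF vT] by blast
  qed
  have neT: "\<And>y. y \<in> vertices T \<Longrightarrow> cl y \<noteq> {}"
  proof -
    fix y assume y: "y \<in> vertices T"
    have "\<forall>w\<in>vertices y. is_internal w \<longrightarrow> children w \<noteq> []"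
    proof (intro ballI impI)
      fix w assume "w \<in> vertices y" "is_internal w"
      then have "length (children w) \<ge> 2" using pl vertices_trans[OF y] unfolding planted_tree_def by blast
      then show "children w \<noteq> []" by auto
    qed
    then show "cl y \<noteq> {}" by (rule cl_nonempty)
  qed
  have distv: "distinct (leaves_list v)" using dist_sub[OF vT] pl unfolding planted_tree_def by blast
  have disjU: "\<And>u1 u2. u1 \<in> set us \<Longrightarrow> u2 \<in> set us \<Longrightarrow> u1 \<noteq> u2 \<Longrightarrow> cl u1 \<inter> cl u2 = {}"
  proof -
    fix u1 u2 assume u: "u1 \<in> set us" "u2 \<in> set us" "u1 \<noteq> u2"
    obtain i where i: "i < length us" "u1 = us!i" using u(1) by (metis in_set_conv_nth)
    obtain j where j: "j < length us" "u2 = us!j" using u(2) by (metis in_set_conv_nth)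
    have "i \<noteq> j" using i j u(3) by blast
    have "distinct (concat (map leaves_list us))" using distv vdef by simp
    then have "set (leaves_list (us ! i)) \<inter> set (leaves_list (us ! j)) = {}"
      using dc i j \<open>i \<noteq> j\<close> by blast
    then show "cl u1 \<inter> cl u2 = {}" using i j by (simp add: cl_def)
  qed
  have injcl: "inj_on cl (set us)"
  proof (rule inj_onI)
    fix u1 u2 assume u: "u1 \<in> set us" "u2 \<in> set us" "cl u1 = cl u2"
    show "u1 = u2"
    proof (rule ccontr)
      assume "u1 \<noteq> u2"
      then have "cl u1 \<inter> cl u2 = {}" using disjU u by blast
      then show False using u neT usv by blast
    qed
  qed
  have disjP: "\<forall>B\<in>P. \<forall>C\<in>P. B \<noteq> C \<longrightarrow> B \<inter> C = {}"
    unfolding P_def using disjU by blast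
  have Psub: "P \<subseteq> cl ` vertices T'"
    unfolding P_def using resolves_clusters[OF rs] usv by blast
  have UP: "\<Union>P \<in> cl ` vertices T'"
  proof -
    have "\<Union>P = cl v" unfolding P_def vdef cl_Node by simp
    then show ?thesis using resolves_clusters[OF rs vT] by simp
  qed
  have G1: "ola_index \<sigma> ` Wset T' P = Rset (mm \<sigma>) P"
    by (rule G[OF bin dist' inj finP Psub disjP UP])
  have VW: "VI v T' = Wset T' P"
  proof -
    have "\<And>w. (\<exists>S\<subseteq>set (children v). 2 \<le> card S \<and> cl w = \<Union> (cl ` S)) \<longleftrightarrow> (\<exists>S\<subseteq>P. 2 \<le> card S \<and> cl w = \<Union>S)"
    proof
      fix w assume "\<exists>S\<subseteq>set (children v). 2 \<le> card S \<and> cl w = \<Union> (cl ` S)"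
      then obtain S where S: "S \<subseteq> set us" "2 \<le> card S" "cl w = \<Union> (cl ` S)" using vdef by auto
      have "card (cl ` S) = card S" using inj_on_subset[OF injcl S(1)] by (rule card_image)
      moreover have "cl ` S \<subseteq> P" using S(1) unfolding P_def by blast
      ultimately show "\<exists>S\<subseteq>P. 2 \<le> card S \<and> cl w = \<Union>S" using S by metis
    next
      fix w assume "\<exists>S\<subseteq>P. 2 \<le> card S \<and> cl w = \<Union>S"
      then obtain S' where S': "S' \<subseteq> P" "2 \<le> card S'" "cl w = \<Union>S'" by blast
      define S where "S = {u \<in> set us. cl u \<in> S'}"
      have SS: "cl ` S = S'" using S'(1) unfolding S_def P_def by blast
      have Ssub: "S \<subseteq> set us" unfolding S_def by blast
      have "card S' = card S" using SS card_image[OF inj_on_subset[OF injcl Ssub]] by simp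
      then show "\<exists>S\<subseteq>set (children v). 2 \<le> card S \<and> cl w = \<Union> (cl ` S)"
        using Ssub S' SS vdef by (metis children.simps(2))
    qed
    then show ?thesis unfolding VI_def Wset_def by simp
  qed
  have RR: "Rset (mm \<sigma>) P = {- int (mu \<sigma> u) | u. u \<in> set us \<and> mu \<sigma> u \<noteq> Min (mu \<sigma> ` set us)}"
  proof -
    have mmu: "\<And>u. mm \<sigma> (cl u) = mu \<sigma> u" by (simp add: mm_def mu_def)
    have im: "mm \<sigma> ` P = mu \<sigma> ` set us" unfolding P_def image_image mmu ..
    show ?thesis unfolding Rset_def im
    proof (rule antisym; rule subsetI)
      fix x assume "x \<in> {- int (mm \<sigma> B) |B. B \<in> P \<and> mm \<sigma> B \<noteq> Min (mu \<sigma> ` set us)}"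
      then obtain B where B: "x = - int (mm \<sigma> B)" "B \<in> P" "mm \<sigma> B \<noteq> Min (mu \<sigma> ` set us)" by blast
      then obtain u where u: "u \<in> set us" "B = cl u" unfolding P_def by blast
      show "x \<in> {- int (mu \<sigma> u) |u. u \<in> set us \<and> mu \<sigma> u \<noteq> Min (mu \<sigma> ` set us)}"
        using B u mmu by auto
    next
      fix x assume "x \<in> {- int (mu \<sigma> u) |u. u \<in> set us \<and> mu \<sigma> u \<noteq> Min (mu \<sigma> ` set us)}"
      then obtain u where u: "x = - int (mu \<sigma> u)" "u \<in> set us" "mu \<sigma> u \<noteq> Min (mu \<sigma> ` set us)" by blast
      have "cl u \<in> P" using u(2) unfolding P_def by blast
      then show "x \<in> {- int (mm \<sigma> B) |B. B \<in> P \<and> mm \<sigma> B \<noteq> Min (mu \<sigma> ` set us)}"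
        using u mmu[of u] by (intro CollectI exI[of _ "cl u"]) simp
    qed
  qed
  show ?thesis using G1 VW RR by simp
qed

theorem mainTheorem8:
  fixes L :: "'a set" and \<rho> :: 'a and T T' T'' v :: "'a tree" and \<sigma> :: "'a \<Rightarrow> nat"
    and us :: "'a tree list"
  assumes "planted_tree L \<rho> T"
    and "resolves L \<rho> T' T" and "resolves L \<rho> T'' T"
    and "leaf_ordering L \<rho> \<sigma>"
    and "v \<in> vertices T" and "v = Node us" and "length us \<ge> 2"
  shows "ola_index \<sigma> ` VI v T' = {- int (mu \<sigma> u) | u. u \<in> set us \<and> mu \<sigma> u \<noteq> Min (mu \<sigma> ` set us)}
       \<and> ola_index \<sigma> ` VI v T'' = {- int (mu \<sigma> u) | u. u \<in> set us \<and> mu \<sigma> u \<noteq> Min (mu \<sigma> ` set us)}"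
  using main_one[OF assms(1) assms(2) assms(4) assms(5) assms(6)]
        main_one[OF assms(1) assms(3) assms(4) assms(5) assms(6)] by blast

end
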